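(* For every field $\mathbb{F}$, all $n,d\ge1$ and every $n^d\times n^d$ matrix $M$ over $\mathbb{F}$, \[ \mathcal L_{\mathsf{nc,sm}}\big(\mathrm{ShiftedTensor}(M)\big)\ \ge\ \frac{\mathrm{PT\text{-}rank}(M)}{n^{\,d-\log_2 d+1}}. \]
   Context: Non-commutative set-multilinear formula size of a tensor $A:[N]^k\to\mathbb{F}$: if $k=1$, $\mathcal L_{\mathsf{nc,sm}}(A)$ is $1$ if $A\ne0$ and $0$ otherwise; if $k\ge2$ it is the minimum of $\sum_i(\mathcal L_{\mathsf{nc,sm}}(B_i)+\mathcal L_{\mathsf{nc,sm}}(C_i))$ over finite families $(e_i,f_i,B_i,C_i)$ with positive integers $e_i+f_i=k$, $B_i:[N]^{e_i}\to\mathbb{F}$, $C_i:[N]^{f_i}\to\mathbb{F}$, $A=\sum_iB_i\otimes C_i$ (where $(B\otimes C)(x,y)=B(x)C(y)$, concatenating coordinates in order). Pairing $\langle i,j\rangle=(i-1)n+j$. $\mathrm{ShiftedTensor}(M):[n^2]^{d+1}\to\mathbb{F}$, $\mathrm{ShiftedTensor}(M)(\langle p,i_1\rangle,\langle j_1,i_2\rangle,\dots,\langle j_{d-1},i_d\rangle,\langle j_d,q\rangle)=\mathbb 1\{p=q=1\}M_{(i_1,\dots,i_d),(j_1,\dots,j_d)}$. Partial transposes: for $k\in[d]$, $M^{\top_k}$ swaps the $k$-th row index with the $k$-th column index; $M^{\top_\kappa}$ composes these over $k\in\kappa\subseteq[d]$. $M$ is PT-basic if $\mathrm{rank}(M^{\top_\kappa})=1$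 for some $\kappa$; $\mathrm{PT\text{-}rank}(M)$ is the least number of PT-basic matrices summing to $M$. Logs base 2. *)

theory Defs
  imports Complex_Main
begin

text \<open>Tensors A : [N]^k -> F are represented as functions on lists of naturals;
only their values on the domain tdom N k (lists of length k with entries in 1..N)
are relevant.\<close>

definition tdom :: "nat \<Rightarrow> nat \<Rightarrow> nat list set" where
  "tdom N k = {x. length x = k \<and> set x \<subseteq> {1..N}}"

text \<open>The tensor product of
B (order e) and C is (B \<otimes> C)(x) = B(take e x) * C(drop e x).  The clamping
min/max in the recursive calls is inert since 1 \<le> e i < k is required; it only
makes termination syntactically evident.\<close>

function Lncsm :: "nat \<Rightarrow> nat \<Rightarrow> (nat list \<Rightarrow> 'a::field) \<Rightarrow> nat" where
  "Lncsm N k A =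
     (if k \<le> 1 then (if (\<exists>x\<in>tdom N k. A x \<noteq> 0) then 1 else 0)
      else Inf {(\<Sum>i<m. Lncsm N (min (e i) (k - 1)) (B i) + Lncsm N (k - max 1 (e i)) (C i))
                 | (m::nat) e B C. (\<forall>i<m. 1 \<le> e i \<and> e i < k) \<and>
                     (\<forall>x\<in>tdom N k. A x = (\<Sum>i<m. B i (take (e i) x) * C i (drop (e i) x)))})"
  by auto
termination by (relation "measure (\<lambda>(N, k, A). k)") auto

definition pairing :: "nat \<Rightarrow> nat \<Rightarrow> nat \<Rightarrow> nat" where
  "pairing n i j = (i - 1) * n + j"
definition unpair1 :: "nat \<Rightarrow> nat \<Rightarrow> nat" where
  "unpair1 n x = (x - 1) div n + 1"
definition unpair2 :: "nat \<Rightarrow> nat \<Rightarrow> nat" where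
  "unpair2 n x = (x - 1) mod n + 1"

text \<open>Matrices of size n^d x n^d with rows/columns indexed by tuples in [n]^d
(lists of length d with entries in 1..n).\<close>

text \<open>ShiftedTensor(M) : [n^2]^(d+1) -> F.  Coordinate t (0..d) is <a_t, b_t>;
p = a_0, i_t = b_(t-1), j_t = a_t (t = 1..d), q = b_d.\<close>
definition ShiftedTensor :: "nat \<Rightarrow> nat \<Rightarrow> (nat list \<Rightarrow> nat list \<Rightarrow> 'a::field) \<Rightarrow> nat list \<Rightarrow> 'a" where
  "ShiftedTensor n d M x =
     (if unpair1 n (x ! 0) = 1 \<and> unpair2 n (x ! d) = 1
      then M (map (unpair2 n) (take d x)) (map (unpair1 n) (drop 1 x)) else 0)"

definition ptrans :: "nat set \<Rightarrow> nat \<Rightarrow> (nat list \<Rightarrow> nat list \<Rightarrow> 'a) \<Rightarrow> nat list \<Rightarrow> nat list \<Rightarrow> 'a" where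
  "ptrans \<kappa> d M r c =
     M (map (\<lambda>t. if Suc t \<in> \<kappa> then c ! t else r ! t) [0..<d])
       (map (\<lambda>t. if Suc t \<in> \<kappa> then r ! t else c ! t) [0..<d])"

definition rank_one :: "nat \<Rightarrow> nat \<Rightarrow> (nat list \<Rightarrow> nat list \<Rightarrow> 'a::field) \<Rightarrow> bool" where
  "rank_one n d M \<longleftrightarrow>
     (\<exists>r\<in>tdom n d. \<exists>c\<in>tdom n d. M r c \<noteq> 0) \<and>
     (\<exists>u v. \<forall>r\<in>tdom n d. \<forall>c\<in>tdom n d. M r c = u r * v c)"

definition PT_basic :: "nat \<Rightarrow> nat \<Rightarrow> (nat list \<Rightarrow> nat list \<Rightarrow> 'a::field) \<Rightarrow> bool" where
  "PT_basic n d M \<longleftrightarrow> (\<exists>\<kappa>\<subseteq>{1..d}. rank_one n d (ptrans \<kappa> d M))"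

definition PT_rank :: "nat \<Rightarrow> nat \<Rightarrow> (nat list \<Rightarrow> nat list \<Rightarrow> 'a::field) \<Rightarrow> nat" where
  "PT_rank n d M = (LEAST s. \<exists>A. (\<forall>i<s. PT_basic n d (A i)) \<and>
      (\<forall>r\<in>tdom n d. \<forall>c\<in>tdom n d. M r c = (\<Sum>i<s. A i r c)))"

end

theory Submission
  imports Defs "HOL-Library.FuncSet"
begin

declare Lncsm.simps[simp del]

definition dep :: "nat \<Rightarrow> nat set \<Rightarrow> (nat list \<Rightarrow> 'a) \<Rightarrow> bool" where
  "dep k S f \<longleftrightarrow> (\<forall>x y. length x = k \<longrightarrow> length y = k \<longrightarrow> (\<forall>t\<in>S. t < k \<longrightarrow> x!t = y!t) \<longrightarrow> f x = f y)"

definition chg :: "nat \<Rightarrow> (nat \<Rightarrow> bool) \<Rightarrow> nat" where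
  "chg k col = card {t. Suc t < k \<and> col t \<noteq> col (Suc t)}"

definition good :: "nat \<Rightarrow> (nat list \<Rightarrow> 'a) \<Rightarrow> (nat list \<Rightarrow> 'a) \<Rightarrow> (nat \<Rightarrow> bool) \<Rightarrow> bool" where
  "good k U V col \<longleftrightarrow> dep k {t. col t} U \<and> dep k {t. \<not> col t} V \<and> k \<le> 2 ^ Suc (chg k col)"

definition extB :: "nat \<Rightarrow> (nat list \<Rightarrow> 'a::field) \<Rightarrow> (nat list \<Rightarrow> 'a) \<times> (nat list \<Rightarrow> 'a) \<times> (nat \<Rightarrow> bool)
   \<Rightarrow> (nat list \<Rightarrow> 'a) \<times> (nat list \<Rightarrow> 'a) \<times> (nat \<Rightarrow> bool)" where
  "extB e C tr = (case tr of (U, V, col) \<Rightarrow>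
     (\<lambda>x. U (take e x) * (if col (e - 1) then 1 else C (drop e x)),
      \<lambda>x. V (take e x) * (if col (e - 1) then C (drop e x) else 1),
      \<lambda>t. if t < e then col t else \<not> col (e - 1)))"

definition extC :: "nat \<Rightarrow> (nat list \<Rightarrow> 'a::field) \<Rightarrow> (nat list \<Rightarrow> 'a) \<times> (nat list \<Rightarrow> 'a) \<times> (nat \<Rightarrow> bool)
   \<Rightarrow> (nat list \<Rightarrow> 'a) \<times> (nat list \<Rightarrow> 'a) \<times> (nat \<Rightarrow> bool)" where
  "extC e B tr = (case tr of (U, V, col) \<Rightarrow>
     (\<lambda>x. (if col 0 then 1 else B (take e x)) * U (drop e x),
      \<lambda>x. (if col 0 then B (take e x) else 1) * V (drop e x),
      \<lambda>t. if t < e then \<not> col 0 else col (t - e)))"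

lemma chg_extB:
  assumes "1 \<le> e" "e < k"
  shows "chg k (\<lambda>t. if t < e then col t else \<not> col (e - 1)) = Suc (chg e col)"
proof -
  have "{t. Suc t < k \<and> (if t < e then col t else \<not> col (e - 1)) \<noteq> (if Suc t < e then col (Suc t) else \<not> col (e - 1))}
        = insert (e - 1) {t. Suc t < e \<and> col t \<noteq> col (Suc t)}"
    using assms by (auto split: if_splits)
  moreover have "e - 1 \<notin> {t. Suc t < e \<and> col t \<noteq> col (Suc t)}" using assms by auto
  moreover have "finite {t. Suc t < e \<and> col t \<noteq> col (Suc t)}" by (rule finite_subset[of _ "{..<e}"]) auto
  ultimately show ?thesis unfolding chg_def by simp
qed

lemma chg_extC:
  assumes "1 \<le> e" "e < k"
  shows "chg k (\<lambda>t. if t < e then \<not> col 0 else col (t - e)) = Suc (chg (k - e) col)"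
proof -
  have "{t. Suc t < k \<and> (if t < e then \<not> col 0 else col (t - e)) \<noteq> (if Suc t < e then \<not> col 0 else col (Suc t - e))}
        = insert (e - 1) ((\<lambda>t. t + e) ` {t. Suc t < k - e \<and> col t \<noteq> col (Suc t)})"
  proof (rule set_eqI)
    fix t
    show "t \<in> {t. Suc t < k \<and> (if t < e then \<not> col 0 else col (t - e)) \<noteq> (if Suc t < e then \<not> col 0 else col (Suc t - e))}
        \<longleftrightarrow> t \<in> insert (e - 1) ((\<lambda>t. t + e) ` {t. Suc t < k - e \<and> col t \<noteq> col (Suc t)})"
    proof (cases "t < e")
      case True
      then show ?thesis using assms by (cases "Suc t < e") auto
    next
      case False
      then obtain s where s: "t = s + e" by (metis le_add_diff_inverse2 not_less)
      show ?thesis using assms unfolding s by (auto simp: image_iff)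
    qed
  qed
  moreover have "e - 1 \<notin> ((\<lambda>t. t + e) ` {t. Suc t < k - e \<and> col t \<noteq> col (Suc t)})" using assms by auto
  moreover have "finite {t. Suc t < k - e \<and> col t \<noteq> col (Suc t)}" by (rule finite_subset[of _ "{..<k}"]) auto
  ultimately show ?thesis unfolding chg_def by (simp add: card_image inj_on_def)
qed


lemma good_extB:
  assumes g: "good e U V col" and e: "1 \<le> e" "e < k" "k \<le> 2 * e"
  shows "case extB e C (U, V, col) of (U', V', col') \<Rightarrow> good k U' V' col'"
proof -
  let ?c = "\<lambda>t. if t < e then col t else \<not> col (e - 1)"
  have dU: "dep e {t. col t} U" and dV: "dep e {t. \<not> col t} V" and ch: "e \<le> 2 ^ Suc (chg e col)"
    using g by (auto simp: good_def)
  have tk: "take e x ! t = x ! t" if "t < e" for x :: "nat list" and t using that by simp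
  have dropeq: "drop e x = drop e y" if "length x = k" "length y = k" "\<forall>t. e \<le> t \<longrightarrow> t < k \<longrightarrow> x!t = y!t" for x y :: "nat list"
    using that e by (intro nth_equalityI) auto
  have "dep k {t. ?c t} (\<lambda>x. U (take e x) * (if col (e - 1) then 1 else C (drop e x)))"
    unfolding dep_def
  proof (intro allI impI)
    fix x y :: "nat list" assume l: "length x = k" "length y = k" and a: "\<forall>t\<in>{t. ?c t}. t < k \<longrightarrow> x ! t = y ! t"
    have "U (take e x) = U (take e y)"
      using dU l e a unfolding dep_def by (auto simp: min_def)
    moreover have "\<not> col (e - 1) \<Longrightarrow> drop e x = drop e y"
      using a l by (intro dropeq) auto
    ultimately show "U (take e x) * (if col (e - 1) then 1 else C (drop e x)) = U (take e y) * (if col (e - 1) then 1 else C (drop e y))"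
      by auto
  qed
  moreover have "dep k {t. \<not> ?c t} (\<lambda>x. V (take e x) * (if col (e - 1) then C (drop e x) else 1))"
    unfolding dep_def
  proof (intro allI impI)
    fix x y :: "nat list" assume l: "length x = k" "length y = k" and a: "\<forall>t\<in>{t. \<not> ?c t}. t < k \<longrightarrow> x ! t = y ! t"
    have "V (take e x) = V (take e y)"
      using dV l e a unfolding dep_def by (auto simp: min_def)
    moreover have "col (e - 1) \<Longrightarrow> drop e x = drop e y"
      using a l by (intro dropeq) auto
    ultimately show "V (take e x) * (if col (e - 1) then C (drop e x) else 1) = V (take e y) * (if col (e - 1) then C (drop e y) else 1)"
      by auto
  qed
  moreover have "k \<le> 2 ^ Suc (chg k ?c)"
    using chg_extB[OF e(1,2), of col] ch e by simp
  ultimately show ?thesis unfolding extB_def good_def by simp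
qed

lemma good_extC:
  assumes g: "good (k - e) U V col" and e: "1 \<le> e" "e < k" "k \<le> 2 * (k - e)"
  shows "case extC e B (U, V, col) of (U', V', col') \<Rightarrow> good k U' V' col'"
proof -
  let ?c = "\<lambda>t. if t < e then \<not> col 0 else col (t - e)"
  have dU: "dep (k - e) {t. col t} U" and dV: "dep (k - e) {t. \<not> col t} V" and ch: "k - e \<le> 2 ^ Suc (chg (k - e) col)"
    using g by (auto simp: good_def)
  have takeeq: "take e x = take e y" if "length x = k" "length y = k" "\<forall>t. t < e \<longrightarrow> x!t = y!t" for x y :: "nat list"
    using that e by (intro nth_equalityI) auto
  have "dep k {t. ?c t} (\<lambda>x. (if col 0 then 1 else B (take e x)) * U (drop e x))"
    unfolding dep_def
  proof (intro allI impI)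
    fix x y :: "nat list" assume l: "length x = k" "length y = k" and a: "\<forall>t\<in>{t. ?c t}. t < k \<longrightarrow> x ! t = y ! t"
    have "U (drop e x) = U (drop e y)"
      using dU l e a unfolding dep_def by (auto simp: add.commute)
    moreover have "\<not> col 0 \<Longrightarrow> take e x = take e y"
      using a l e by (intro takeeq) auto
    ultimately show "(if col 0 then 1 else B (take e x)) * U (drop e x) = (if col 0 then 1 else B (take e y)) * U (drop e y)"
      by auto
  qed
  moreover have "dep k {t. \<not> ?c t} (\<lambda>x. (if col 0 then B (take e x) else 1) * V (drop e x))"
    unfolding dep_def
  proof (intro allI impI)
    fix x y :: "nat list" assume l: "length x = k" "length y = k" and a: "\<forall>t\<in>{t. \<not> ?c t}. t < k \<longrightarrow> x ! t = y ! t"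
    have "V (drop e x) = V (drop e y)"
      using dV l e a unfolding dep_def by (auto simp: add.commute)
    moreover have "col 0 \<Longrightarrow> take e x = take e y"
      using a l e by (intro takeeq) auto
    ultimately show "(if col 0 then B (take e x) else 1) * V (drop e x) = (if col 0 then B (take e y) else 1) * V (drop e y)"
      by auto
  qed
  moreover have "k \<le> 2 ^ Suc (chg k ?c)"
    using chg_extC[OF e(1,2), of col] ch e by simp
  ultimately show ?thesis unfolding extC_def good_def by simp
qed

lemma val_extB: "(case extB e C (U, V, col) of (U', V', col') \<Rightarrow> U' x * V' x) = (U (take e x) * V (take e x)) * C (drop e x)"
  unfolding extB_def by (simp add: algebra_simps)

lemma val_extC: "(case extC e B (U, V, col) of (U', V', col') \<Rightarrow> U' x * V' x) = B (take e x) * (U (drop e x) * V (drop e x))"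
  unfolding extC_def by (simp add: algebra_simps)


definition tv :: "nat list \<Rightarrow> (nat list \<Rightarrow> 'a::field) \<times> (nat list \<Rightarrow> 'a) \<times> (nat \<Rightarrow> bool) \<Rightarrow> 'a" where
  "tv x tr = (case tr of (U, V, col) \<Rightarrow> U x * V x)"

definition goodt :: "nat \<Rightarrow> (nat list \<Rightarrow> 'a::field) \<times> (nat list \<Rightarrow> 'a) \<times> (nat \<Rightarrow> bool) \<Rightarrow> bool" where
  "goodt k tr = (case tr of (U, V, col) \<Rightarrow> good k U V col)"

lemma sum_list_concat_map: "sum_list (map f (concat xss)) = sum_list (map (\<lambda>xs. sum_list (map f xs)) xss)"
  by (induct xss) auto

lemma Lncsm_ge2:
  assumes "2 \<le> k"
  shows "Lncsm N k A = Inf {(\<Sum>i<m. Lncsm N (min (e i) (k - 1)) (B i) + Lncsm N (k - max 1 (e i)) (C i))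
                 | (m::nat) e B C. (\<forall>i<m. 1 \<le> e i \<and> e i < k) \<and>
                     (\<forall>x\<in>tdom N k. A x = (\<Sum>i<m. B i (take (e i) x) * C i (drop (e i) x)))}"
  using assms by (subst Lncsm.simps) simp

lemma Lncsm_1: "Lncsm N 1 A = (if (\<exists>x\<in>tdom N 1. A x \<noteq> 0) then 1 else 0)"
  by (subst Lncsm.simps) simp

lemma decomp:
  fixes A :: "nat list \<Rightarrow> 'a::field"
  shows "1 \<le> k \<Longrightarrow> \<exists>ts. length ts \<le> Lncsm N k A \<and> (\<forall>tr\<in>set ts. goodt k tr) \<and>
            (\<forall>x\<in>tdom N k. A x = (\<Sum>tr\<leftarrow>ts. tv x tr))"
proof (induction k arbitrary: A rule: less_induct)
  case (less k)
  show ?case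
  proof (cases "k = 1")
    case True
    show ?thesis
    proof (cases "\<exists>x\<in>tdom N 1. A x \<noteq> 0")
      case True
      have "goodt 1 (A, \<lambda>_. 1, \<lambda>_. True)"
        unfolding goodt_def good_def dep_def chg_def
        by (auto simp: length_Suc_conv)
      then show ?thesis using True \<open>k = 1\<close>
        by (intro exI[of _ "[(A, \<lambda>_. 1, \<lambda>_. True)]"]) (auto simp: Lncsm_1[simplified] tv_def)
    next
      case False
      then show ?thesis using \<open>k = 1\<close> by (intro exI[of _ "[]"]) auto
    qed
  next
    case False
    with less.prems have k2: "2 \<le> k" by simp
    let ?S = "{(\<Sum>i<m. Lncsm N (min (e i) (k - 1)) (B i) + Lncsm N (k - max 1 (e i)) (C i))
                 | (m::nat) e B C. (\<forall>i<m. 1 \<le> e i \<and> e i < k) \<and>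
                     (\<forall>x\<in>tdom N k. A x = (\<Sum>i<m. B i (take (e i) x) * C i (drop (e i) x)))}"
    have wit: "\<forall>x\<in>tdom N k. A x = (\<Sum>i<N. (\<lambda>i y. if y = [Suc i] then (1::'a) else 0) i (take ((\<lambda>_. 1::nat) i) x)
                   * (\<lambda>i z. A (Suc i # z)) i (drop ((\<lambda>_. 1::nat) i) x))"
    proof
      fix x assume x: "x \<in> tdom N k"
      then have lx: "length x = k" and sx: "set x \<subseteq> {1..N}" by (auto simp: tdom_def)
      obtain a xs where xa: "x = a # xs" using lx k2 by (cases x) auto
      have a: "1 \<le> a" "a \<le> N" using sx xa by auto
      have "(\<Sum>i<N. (if take 1 x = [Suc i] then 1 else 0) * A (Suc i # drop 1 x))
            = (\<Sum>i<N. if i = a - 1 then A (Suc i # xs) else 0)"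
        using a by (intro sum.cong) (auto simp: xa)
      also have "\<dots> = A (Suc (a - 1) # xs)" using a by (simp add: Suc_le_eq) linarith
      also have "\<dots> = A x" using a xa by simp
      finally show "A x = (\<Sum>i<N. (\<lambda>i y. if y = [Suc i] then (1::'a) else 0) i (take ((\<lambda>_. 1::nat) i) x)
                   * (\<lambda>i z. A (Suc i # z)) i (drop ((\<lambda>_. 1::nat) i) x))" by simp
    qed
    have "(\<Sum>i<N. Lncsm N (min ((\<lambda>_. 1::nat) i) (k - 1)) ((\<lambda>i y. if y = [Suc i] then (1::'a) else 0) i)
              + Lncsm N (k - max 1 ((\<lambda>_. 1::nat) i)) ((\<lambda>i z. A (Suc i # z)) i)) \<in> ?S"
      apply (rule CollectI, rule exI[of _ N], rule exI[of _ "\<lambda>_. 1::nat"], rule exI[of _ "\<lambda>i y. if y = [Suc i] then 1 else 0"],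
          rule exI[of _ "\<lambda>i z. A (Suc i # z)"], intro conjI)
        apply (rule refl)
       using k2 apply simp
      by (rule wit)
    then have "?S \<noteq> {}" by blast
    then have "Inf ?S \<in> ?S" by (rule Inf_nat_def1)
    then obtain m e and B C :: "nat \<Rightarrow> nat list \<Rightarrow> 'a" where
      L: "Lncsm N k A = (\<Sum>i<m. Lncsm N (min (e i) (k - 1)) (B i) + Lncsm N (k - max 1 (e i)) (C i))"
      and ek: "\<forall>i<m. 1 \<le> e i \<and> e i < k"
      and dec: "\<forall>x\<in>tdom N k. A x = (\<Sum>i<m. B i (take (e i) x) * C i (drop (e i) x))"
      using Lncsm_ge2[OF k2, of N A] by auto
    have L2: "Lncsm N k A = (\<Sum>i<m. Lncsm N (e i) (B i) + Lncsm N (k - e i) (C i))"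
      unfolding L using ek by (intro sum.cong) auto
    have "\<forall>i<m. \<exists>tsi. length tsi \<le> Lncsm N (e i) (B i) + Lncsm N (k - e i) (C i) \<and> (\<forall>tr\<in>set tsi. goodt k tr) \<and>
            (\<forall>x\<in>tdom N k. B i (take (e i) x) * C i (drop (e i) x) = (\<Sum>tr\<leftarrow>tsi. tv x tr))"
    proof (intro allI impI)
      fix i assume i: "i < m"
      have e: "1 \<le> e i" "e i < k" using ek i by auto
      have tk: "take (e i) x \<in> tdom N (e i)" "drop (e i) x \<in> tdom N (k - e i)" if "x \<in> tdom N k" for x
        using that e by (auto simp: tdom_def dest: in_set_takeD in_set_dropD)
      show "\<exists>tsi. length tsi \<le> Lncsm N (e i) (B i) + Lncsm N (k - e i) (C i) \<and> (\<forall>tr\<in>set tsi. goodt k tr) \<and>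
            (\<forall>x\<in>tdom N k. B i (take (e i) x) * C i (drop (e i) x) = (\<Sum>tr\<leftarrow>tsi. tv x tr))"
      proof (cases "k \<le> 2 * e i")
        case True
        obtain tsB where tsB: "length tsB \<le> Lncsm N (e i) (B i)" "\<forall>tr\<in>set tsB. goodt (e i) tr"
            "\<forall>x\<in>tdom N (e i). B i x = (\<Sum>tr\<leftarrow>tsB. tv x tr)"
          using less.IH[of "e i" "B i"] e by auto
        show ?thesis
        proof (intro exI conjI ballI)
          show "length (map (extB (e i) (C i)) tsB) \<le> Lncsm N (e i) (B i) + Lncsm N (k - e i) (C i)"
            using tsB by simp
          fix tr assume "tr \<in> set (map (extB (e i) (C i)) tsB)"
          then obtain U V col where "(U, V, col) \<in> set tsB" and tr: "tr = extB (e i) (C i) (U, V, col)"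
            by auto
          then have "good (e i) U V col" using tsB by (auto simp: goodt_def)
          then show "goodt k tr" unfolding tr goodt_def using good_extB[of "e i" U V col k "C i"] e True by simp
        next
          fix x assume x: "x \<in> tdom N k"
          have "B i (take (e i) x) * C i (drop (e i) x) = (\<Sum>tr\<leftarrow>tsB. tv (take (e i) x) tr * C i (drop (e i) x))"
            using tsB(3) tk(1)[OF x] by (simp add: sum_list_mult_const)
          also have "\<dots> = (\<Sum>tr\<leftarrow>map (extB (e i) (C i)) tsB. tv x tr)"
            unfolding map_map o_def
            by (intro arg_cong[where f = sum_list] map_cong refl) (auto simp: tv_def val_extB[unfolded tv_def])
          finally show "B i (take (e i) x) * C i (drop (e i) x) = (\<Sum>tr\<leftarrow>map (extB (e i) (C i)) tsB. tv x tr)" .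
        qed
      next
        case False
        obtain tsC where tsC: "length tsC \<le> Lncsm N (k - e i) (C i)" "\<forall>tr\<in>set tsC. goodt (k - e i) tr"
            "\<forall>x\<in>tdom N (k - e i). C i x = (\<Sum>tr\<leftarrow>tsC. tv x tr)"
        proof -
          have "k - e i < k" "1 \<le> k - e i" using e by auto
          then show ?thesis using less.IH[of "k - e i" "C i"] that by blast
        qed
        show ?thesis
        proof (intro exI conjI ballI)
          show "length (map (extC (e i) (B i)) tsC) \<le> Lncsm N (e i) (B i) + Lncsm N (k - e i) (C i)"
            using tsC by simp
          fix tr assume "tr \<in> set (map (extC (e i) (B i)) tsC)"
          then obtain U V col where "(U, V, col) \<in> set tsC" and tr: "tr = extC (e i) (B i) (U, V, col)"
            by auto
          then have "good (k - e i) U V col" using tsC by (auto simp: goodt_def)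
          then show "goodt k tr" unfolding tr goodt_def using good_extC[of k "e i" U V col "B i"] e False by simp
        next
          fix x assume x: "x \<in> tdom N k"
          have "B i (take (e i) x) * C i (drop (e i) x) = (\<Sum>tr\<leftarrow>tsC. B i (take (e i) x) * tv (drop (e i) x) tr)"
            using tsC(3) tk(2)[OF x] by (simp add: sum_list_const_mult)
          also have "\<dots> = (\<Sum>tr\<leftarrow>map (extC (e i) (B i)) tsC. tv x tr)"
            unfolding map_map o_def
            by (intro arg_cong[where f = sum_list] map_cong refl) (auto simp: tv_def val_extC[unfolded tv_def])
          finally show "B i (take (e i) x) * C i (drop (e i) x) = (\<Sum>tr\<leftarrow>map (extC (e i) (B i)) tsC. tv x tr)" .
        qed
      qed
    qed
    then obtain TS where TS: "\<forall>i<m. length (TS i) \<le> Lncsm N (e i) (B i) + Lncsm N (k - e i) (C i) \<and> (\<forall>tr\<in>set (TS i). goodt k tr) \<and>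
            (\<forall>x\<in>tdom N k. B i (take (e i) x) * C i (drop (e i) x) = (\<Sum>tr\<leftarrow>TS i. tv x tr))"
      by metis
    show ?thesis
    proof (intro exI conjI ballI)
      have "length (concat (map TS [0..<m])) = (\<Sum>i<m. length (TS i))"
        by (simp add: length_concat interv_sum_list_conv_sum_set_nat atLeast0LessThan)
      also have "\<dots> \<le> Lncsm N k A" unfolding L2 using TS by (intro sum_mono) auto
      finally show "length (concat (map TS [0..<m])) \<le> Lncsm N k A" .
      fix tr assume "tr \<in> set (concat (map TS [0..<m]))"
      then show "goodt k tr" using TS by auto
    next
      fix x assume x: "x \<in> tdom N k"
      have "A x = (\<Sum>i<m. (\<Sum>tr\<leftarrow>TS i. tv x tr))" using dec x TS by simp
      also have "\<dots> = (\<Sum>tr\<leftarrow>concat (map TS [0..<m]). tv x tr)"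
        by (simp add: sum_list_concat_map interv_sum_list_conv_sum_set_nat atLeast0LessThan o_def)
      finally show "A x = (\<Sum>tr\<leftarrow>concat (map TS [0..<m]). tv x tr)" .
    qed
  qed
qed


definition X :: "nat \<Rightarrow> nat \<Rightarrow> nat list \<Rightarrow> nat list \<Rightarrow> nat list" where
  "X n d r c = map (\<lambda>t. pairing n (if t = 0 then 1 else c ! (t - 1)) (if t = d then 1 else r ! t)) [0..<Suc d]"

definition Mo :: "nat \<Rightarrow> (nat \<Rightarrow> bool) \<Rightarrow> nat set" where
  "Mo d col = {t. t < d \<and> col t = col (Suc t)}"

definition subz :: "nat \<Rightarrow> nat set \<Rightarrow> (nat \<Rightarrow> nat) \<Rightarrow> nat list \<Rightarrow> nat list" where
  "subz d S z c = map (\<lambda>t. if t \<in> S then z t else c ! t) [0..<d]"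

definition Fz :: "nat \<Rightarrow> nat \<Rightarrow> (nat list \<Rightarrow> 'a::field) \<Rightarrow> (nat list \<Rightarrow> 'a) \<Rightarrow> (nat \<Rightarrow> bool) \<Rightarrow> (nat \<Rightarrow> nat)
    \<Rightarrow> nat list \<Rightarrow> nat list \<Rightarrow> 'a" where
  "Fz n d U V col z r c = (\<Prod>t\<in>Mo d col. if c ! t = z t then 1 else 0) *
     (U (X n d r (subz d (Mo d col) z c)) * V (X n d r (subz d (Mo d col) z c)))"

lemma finite_Mo: "finite (Mo d col)" unfolding Mo_def by (rule finite_subset[of _ "{..<d}"]) auto

lemma sum_Fz:
  assumes r: "r \<in> tdom n d" and c: "c \<in> tdom n d"
  shows "(\<Sum>z\<in>PiE (Mo d col) (\<lambda>_. {1..n}). Fz n d U V col z r c) = U (X n d r c) * V (X n d r c)"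
proof -
  let ?z0 = "restrict (\<lambda>t. c ! t) (Mo d col)"
  have lc: "length c = d" and sc: "set c \<subseteq> {1..n}" using c by (auto simp: tdom_def)
  have z0: "?z0 \<in> PiE (Mo d col) (\<lambda>_. {1..n})"
    using sc lc by (auto simp: Mo_def dest!: nth_mem)
  have sub0: "subz d (Mo d col) ?z0 c = c"
    using lc by (intro nth_equalityI) (auto simp: subz_def)
  have "(\<Sum>z\<in>PiE (Mo d col) (\<lambda>_. {1..n}). Fz n d U V col z r c)
      = (\<Sum>z\<in>PiE (Mo d col) (\<lambda>_. {1..n}). if z = ?z0 then U (X n d r c) * V (X n d r c) else 0)"
  proof (intro sum.cong refl)
    fix z assume z: "z \<in> PiE (Mo d col) (\<lambda>_. {1..n})"
    show "Fz n d U V col z r c = (if z = ?z0 then U (X n d r c) * V (X n d r c) else 0)"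
    proof (cases "z = ?z0")
      case True
      then show ?thesis unfolding Fz_def using sub0 by simp
    next
      case False
      then obtain t where t: "t \<in> Mo d col" "z t \<noteq> c ! t"
        using z by (auto simp: PiE_def extensional_def fun_eq_iff restrict_def split: if_splits)
      have "(\<Prod>t\<in>Mo d col. if c ! t = z t then (1::'a) else 0) = 0"
        using t finite_Mo by (intro prod_zero) (auto intro!: bexI[of _ t])
      then show ?thesis unfolding Fz_def using False by simp
    qed
  qed
  also have "\<dots> = U (X n d r c) * V (X n d r c)"
    using z0 by (simp add: finite_Mo finite_PiE)
  finally show ?thesis .
qed

lemma ptrans_inv:
  assumes "length r = d" "length c = d"
  shows "ptrans \<kappa> d F (map (\<lambda>t. if Suc t \<in> \<kappa> then c ! t else r ! t) [0..<d])
                        (map (\<lambda>t. if Suc t \<in> \<kappa> then r ! t else c ! t) [0..<d]) = F r c"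
proof -
  have "map (\<lambda>t. if Suc t \<in> \<kappa> then map (\<lambda>t. if Suc t \<in> \<kappa> then r ! t else c ! t) [0..<d] ! t
           else map (\<lambda>t. if Suc t \<in> \<kappa> then c ! t else r ! t) [0..<d] ! t) [0..<d] = r"
    using assms by (intro nth_equalityI) auto
  moreover have "map (\<lambda>t. if Suc t \<in> \<kappa> then map (\<lambda>t. if Suc t \<in> \<kappa> then c ! t else r ! t) [0..<d] ! t
           else map (\<lambda>t. if Suc t \<in> \<kappa> then r ! t else c ! t) [0..<d] ! t) [0..<d] = c"
    using assms by (intro nth_equalityI) auto
  ultimately show ?thesis unfolding ptrans_def by simp
qed

lemma Fz_ptb:
  assumes g: "good (Suc d) U V col"
  shows "PT_basic n d (Fz n d U V col z) \<or> (\<forall>r\<in>tdom n d. \<forall>c\<in>tdom n d. Fz n d U V col z r c = 0)"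
proof -
  define \<kappa> where "\<kappa> = Suc ` {t. t < d \<and> \<not> col t}"
  have kap: "t < d \<Longrightarrow> Suc t \<in> \<kappa> \<longleftrightarrow> \<not> col t" for t unfolding \<kappa>_def by auto
  have ksub: "\<kappa> \<subseteq> {1..d}" unfolding \<kappa>_def by auto
  let ?F = "Fz n d U V col z"
  define u where "u r = (\<Prod>t\<in>Mo d col \<inter> {t. \<not> col t}. if r ! t = z t then 1 else 0) *
       U (X n d r (subz d (Mo d col) z r))" for r
  define v where "v c = (\<Prod>t\<in>Mo d col - {t. \<not> col t}. if c ! t = z t then 1 else 0) *
       V (X n d c (subz d (Mo d col) z c))" for c
  have dU: "dep (Suc d) {t. col t} U" and dV: "dep (Suc d) {t. \<not> col t} V" using g by (auto simp: good_def)
  have fac: "ptrans \<kappa> d ?F r c = u r * v c" if r: "r \<in> tdom n d" and c: "c \<in> tdom n d" for r c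
  proof -
    have lr: "length r = d" and lc: "length c = d" using r c by (auto simp: tdom_def)
    define r' where "r' = map (\<lambda>t. if Suc t \<in> \<kappa> then c ! t else r ! t) [0..<d]"
    define c' where "c' = map (\<lambda>t. if Suc t \<in> \<kappa> then r ! t else c ! t) [0..<d]"
    have r'n: "t < d \<Longrightarrow> r' ! t = (if col t then r ! t else c ! t)" for t unfolding r'_def using kap by auto
    have c'n: "t < d \<Longrightarrow> c' ! t = (if col t then c ! t else r ! t)" for t unfolding c'_def using kap by auto
    have pt: "ptrans \<kappa> d ?F r c = ?F r' c'" unfolding ptrans_def r'_def c'_def ..
    have prod: "(\<Prod>t\<in>Mo d col. if c' ! t = z t then (1::'a) else 0)
       = (\<Prod>t\<in>Mo d col \<inter> {t. \<not> col t}. if r ! t = z t then 1 else 0) *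
         (\<Prod>t\<in>Mo d col - {t. \<not> col t}. if c ! t = z t then 1 else 0)"
    proof -
      have "(\<Prod>t\<in>Mo d col. if c' ! t = z t then (1::'a) else 0)
         = (\<Prod>t\<in>Mo d col \<inter> {t. \<not> col t}. if c' ! t = z t then 1 else 0) *
           (\<Prod>t\<in>Mo d col - {t. \<not> col t}. if c' ! t = z t then 1 else 0)"
        by (rule prod.Int_Diff[OF finite_Mo])
      also have "\<dots> = (\<Prod>t\<in>Mo d col \<inter> {t. \<not> col t}. if r ! t = z t then 1 else 0) *
         (\<Prod>t\<in>Mo d col - {t. \<not> col t}. if c ! t = z t then 1 else 0)"
        by (intro arg_cong2[where f = "(*)"] prod.cong refl) (auto simp: c'n Mo_def)
      finally show ?thesis .
    qed
    have XU: "U (X n d r' (subz d (Mo d col) z c')) = U (X n d r (subz d (Mo d col) z r))"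
      using dU unfolding dep_def
    proof (elim allE impE)
      show "\<forall>t\<in>{t. col t}. t < Suc d \<longrightarrow> X n d r' (subz d (Mo d col) z c') ! t = X n d r (subz d (Mo d col) z r) ! t"
      proof (intro ballI impI)
        fix t assume t: "t \<in> {t. col t}" "t < Suc d"
        show "X n d r' (subz d (Mo d col) z c') ! t = X n d r (subz d (Mo d col) z r) ! t"
          using t r'n c'n unfolding X_def subz_def
          by (auto simp: nth_append Mo_def simp del: upt_Suc)
      qed
    qed (auto simp: X_def)
    have XV: "V (X n d r' (subz d (Mo d col) z c')) = V (X n d c (subz d (Mo d col) z c))"
      using dV unfolding dep_def
    proof (elim allE impE)
      show "\<forall>t\<in>{t. \<not> col t}. t < Suc d \<longrightarrow> X n d r' (subz d (Mo d col) z c') ! t = X n d c (subz d (Mo d col) z c) ! t"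
      proof (intro ballI impI)
        fix t assume t: "t \<in> {t. \<not> col t}" "t < Suc d"
        show "X n d r' (subz d (Mo d col) z c') ! t = X n d c (subz d (Mo d col) z c) ! t"
          using t r'n c'n unfolding X_def subz_def
          by (auto simp: nth_append Mo_def simp del: upt_Suc)
      qed
    qed (auto simp: X_def)
    show ?thesis unfolding pt Fz_def prod XU XV u_def v_def by (simp add: algebra_simps)
  qed
  show ?thesis
  proof (cases "\<exists>r\<in>tdom n d. \<exists>c\<in>tdom n d. ptrans \<kappa> d ?F r c \<noteq> 0")
    case True
    then have "rank_one n d (ptrans \<kappa> d ?F)" unfolding rank_one_def using fac by blast
    then show ?thesis unfolding PT_basic_def using ksub by blast
  next
    case False
    have "?F r c = 0" if r: "r \<in> tdom n d" and c: "c \<in> tdom n d" for r c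
    proof -
      have lr: "length r = d" and lc: "length c = d" using r c by (auto simp: tdom_def)
      have "map (\<lambda>t. if Suc t \<in> \<kappa> then c ! t else r ! t) [0..<d] \<in> tdom n d"
           "map (\<lambda>t. if Suc t \<in> \<kappa> then r ! t else c ! t) [0..<d] \<in> tdom n d"
        using r c lr lc by (auto simp: tdom_def dest!: nth_mem)
      then show ?thesis using False ptrans_inv[OF lr lc, of \<kappa> ?F] by auto
    qed
    then show ?thesis by blast
  qed
qed


lemma pairing_bounds:
  assumes "1 \<le> a" "a \<le> n" "1 \<le> b" "b \<le> n"
  shows "1 \<le> pairing n a b" "pairing n a b \<le> n ^ 2"
    "unpair1 n (pairing n a b) = a" "unpair2 n (pairing n a b) = b"
proof -
  have "(a - 1) * n \<le> (n - 1) * n" using assms by simp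
  then have "(a - 1) * n + b \<le> (n - 1) * n + n" using assms by linarith
  also have "\<dots> = n ^ 2" using assms by (cases n) (auto simp: power2_eq_square)
  finally show "pairing n a b \<le> n ^ 2" unfolding pairing_def .
  show "1 \<le> pairing n a b" using assms unfolding pairing_def by simp
  have e: "(a - 1) * n + b - 1 = (a - 1) * n + (b - 1)" using assms by simp
  have bl: "b - 1 < n" using assms by simp
  have np: "0 < n" using assms by simp
  have "((a - 1) * n + (b - 1)) div n = (b - 1) div n + (a - 1)"
    using np by (metis add.commute div_mult_self1 less_not_refl2)
  then have "((a - 1) * n + (b - 1)) div n = a - 1" using bl by simp
  then show "unpair1 n (pairing n a b) = a" unfolding unpair1_def pairing_def e
    using assms by simp
  have "((a - 1) * n + (b - 1)) mod n = b - 1" using bl by simp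
  then show "unpair2 n (pairing n a b) = b" unfolding unpair2_def pairing_def e
    using assms by simp
qed

lemma X_tdom:
  assumes n: "1 \<le> n" and r: "r \<in> tdom n d" and c: "c \<in> tdom n d"
  shows "X n d r c \<in> tdom (n ^ 2) (Suc d)"
proof -
  have lr: "length r = d" and lc: "length c = d" and sr: "set r \<subseteq> {1..n}" and sc: "set c \<subseteq> {1..n}"
    using r c by (auto simp: tdom_def)
  have a: "1 \<le> (if t = 0 then 1 else c ! (t - 1)) \<and> (if t = 0 then 1 else c ! (t - 1)) \<le> n"
    if "t < Suc d" for t
  proof (cases "t = 0")
    case False
    then have "c ! (t - 1) \<in> set c" using that lc by (intro nth_mem) simp
    then show ?thesis using sc False by auto
  qed (use n in simp)
  have b: "1 \<le> (if t = d then 1 else r ! t) \<and> (if t = d then 1 else r ! t) \<le> n"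
    if "t < Suc d" for t
  proof (cases "t = d")
    case False
    then have "r ! t \<in> set r" using that lr by (intro nth_mem) simp
    then show ?thesis using sr False by auto
  qed (use n in simp)
  show ?thesis unfolding tdom_def X_def
    using pairing_bounds(1,2)[OF conjunct1[OF a] conjunct2[OF a] conjunct1[OF b] conjunct2[OF b]]
    by (auto simp del: upt_Suc)
qed

lemma ST_X:
  assumes n: "1 \<le> n" and d: "1 \<le> d" and r: "r \<in> tdom n d" and c: "c \<in> tdom n d"
  shows "ShiftedTensor n d M (X n d r c) = M r c"
proof -
  have lr: "length r = d" and lc: "length c = d" and sr: "set r \<subseteq> {1..n}" and sc: "set c \<subseteq> {1..n}"
    using r c by (auto simp: tdom_def)
  have a: "1 \<le> (if t = 0 then 1 else c ! (t - 1)) \<and> (if t = 0 then 1 else c ! (t - 1)) \<le> n"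
    if "t < Suc d" for t
  proof (cases "t = 0")
    case False
    then have "c ! (t - 1) \<in> set c" using that lc by (intro nth_mem) simp
    then show ?thesis using sc False by auto
  qed (use n in simp)
  have b: "1 \<le> (if t = d then 1 else r ! t) \<and> (if t = d then 1 else r ! t) \<le> n"
    if "t < Suc d" for t
  proof (cases "t = d")
    case False
    then have "r ! t \<in> set r" using that lr by (intro nth_mem) simp
    then show ?thesis using sr False by auto
  qed (use n in simp)
  have Xn: "X n d r c ! t = pairing n (if t = 0 then 1 else c ! (t - 1)) (if t = d then 1 else r ! t)"
    if "t < Suc d" for t using that unfolding X_def by (simp del: upt_Suc)
  have u1: "unpair1 n (X n d r c ! t) = (if t = 0 then 1 else c ! (t - 1))" if "t < Suc d" for t
    using pairing_bounds(3)[OF conjunct1[OF a] conjunct2[OF a] conjunct1[OF b] conjunct2[OF b]] that Xn by simp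
  have u2: "unpair2 n (X n d r c ! t) = (if t = d then 1 else r ! t)" if "t < Suc d" for t
    using pairing_bounds(4)[OF conjunct1[OF a] conjunct2[OF a] conjunct1[OF b] conjunct2[OF b]] that Xn by simp
  have lX: "length (X n d r c) = Suc d" unfolding X_def by simp
  have 1: "unpair1 n (X n d r c ! 0) = 1" using u1[of 0] by simp
  have 2: "unpair2 n (X n d r c ! d) = 1" using u2[of d] by simp
  have 3: "map (unpair2 n) (take d (X n d r c)) = r"
    using lX lr u2 by (intro nth_equalityI) auto
  have 4: "map (unpair1 n) (drop 1 (X n d r c)) = c"
    using lX lc u1 by (intro nth_equalityI) auto
  show ?thesis unfolding ShiftedTensor_def using 1 2 3 4 by simp
qed

lemma ptb_sum:
  fixes F :: "'b \<Rightarrow> nat list \<Rightarrow> nat list \<Rightarrow> 'a::field"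
  assumes J: "finite J"
    and ptb: "\<forall>j\<in>J. PT_basic n d (F j) \<or> (\<forall>r\<in>tdom n d. \<forall>c\<in>tdom n d. F j r c = 0)"
    and M: "\<forall>r\<in>tdom n d. \<forall>c\<in>tdom n d. M r c = (\<Sum>j\<in>J. F j r c)"
  shows "PT_rank n d M \<le> card J"
proof -
  define J' where "J' = {j\<in>J. PT_basic n d (F j)}"
  have fJ': "finite J'" using J unfolding J'_def by simp
  obtain h where h: "bij_betw h {0..<card J'} J'" using ex_bij_betw_nat_finite[OF fJ'] by blast
  have "\<exists>A. (\<forall>i<card J'. PT_basic n d (A i)) \<and>
      (\<forall>r\<in>tdom n d. \<forall>c\<in>tdom n d. M r c = (\<Sum>i<card J'. A i r c))"
  proof (intro exI[of _ "\<lambda>i. F (h i)"] conjI ballI allI impI)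
    fix i assume "i < card J'"
    then have "h i \<in> J'" using h by (auto simp: bij_betw_def)
    then show "PT_basic n d (F (h i))" unfolding J'_def by simp
  next
    fix r c assume r: "r \<in> tdom n d" and c: "c \<in> tdom n d"
    have "(\<Sum>i<card J'. F (h i) r c) = (\<Sum>j\<in>J'. F j r c)"
      using sum.reindex_bij_betw[OF h, of "\<lambda>j. F j r c"] by (simp add: atLeast0LessThan)
    also have "\<dots> = (\<Sum>j\<in>J. F j r c)"
      using J ptb r c by (intro sum.mono_neutral_left) (auto simp: J'_def)
    finally show "M r c = (\<Sum>i<card J'. F (h i) r c)" using M r c by simp
  qed
  then have "PT_rank n d M \<le> card J'" unfolding PT_rank_def by (rule Least_le)
  also have "\<dots> \<le> card J" using J unfolding J'_def by (intro card_mono) auto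
  finally show ?thesis .
qed

lemma card_Mo:
  assumes "good (Suc d) U V col" "1 \<le> d" "1 \<le> n"
  shows "real (n ^ card (Mo d col)) \<le> real n powr (real d - log 2 (real d) + 1)"
proof -
  let ?C = "{t. Suc t < Suc d \<and> col t \<noteq> col (Suc t)}"
  have un: "{..<d} = Mo d col \<union> ?C" and dis: "Mo d col \<inter> ?C = {}" unfolding Mo_def by auto
  have fC: "finite ?C" by (rule finite_subset[of _ "{..<d}"]) auto
  have "d = card (Mo d col) + chg (Suc d) col"
    unfolding chg_def using card_Un_disjoint[OF finite_Mo fC dis] un by (metis card_lessThan)
  then have cm: "real (card (Mo d col)) = real d - real (chg (Suc d) col)" by simp
  have "real (Suc d) \<le> 2 ^ Suc (chg (Suc d) col)" using assms(1) unfolding good_def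
    by (metis of_nat_le_iff of_nat_numeral of_nat_power)
  then have "log 2 (real (Suc d)) \<le> log 2 (2 ^ Suc (chg (Suc d) col))"
    by (intro log_mono) auto
  moreover have "log 2 ((2::real) ^ Suc (chg (Suc d) col)) = real (Suc (chg (Suc d) col))"
    by (subst log_nat_power) auto
  ultimately have l1: "log 2 (real (Suc d)) \<le> real (Suc (chg (Suc d) col))" by linarith
  have "log 2 (real d) \<le> log 2 (real (Suc d))" using assms by (intro log_mono) auto
  then have ex: "real (card (Mo d col)) \<le> real d - log 2 (real d) + 1" using cm l1 by simp
  have "real (n ^ card (Mo d col)) = real n powr real (card (Mo d col))"
    using assms by (simp add: powr_realpow)
  also have "\<dots> \<le> real n powr (real d - log 2 (real d) + 1)"
    using assms ex by (intro powr_mono) auto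
  finally show ?thesis .
qed


definition Jt :: "nat \<Rightarrow> nat \<Rightarrow> (nat list \<Rightarrow> 'a::field) \<times> (nat list \<Rightarrow> 'a) \<times> (nat \<Rightarrow> bool) \<Rightarrow> (nat \<Rightarrow> nat) set" where
  "Jt n d tr = (case tr of (U, V, col) \<Rightarrow> PiE (Mo d col) (\<lambda>_. {1..n}))"

definition Ft :: "nat \<Rightarrow> nat \<Rightarrow> (nat list \<Rightarrow> 'a::field) \<times> (nat list \<Rightarrow> 'a) \<times> (nat \<Rightarrow> bool) \<Rightarrow> (nat \<Rightarrow> nat)
    \<Rightarrow> nat list \<Rightarrow> nat list \<Rightarrow> 'a" where
  "Ft n d tr z = (case tr of (U, V, col) \<Rightarrow> Fz n d U V col z)"

lemma Jt_finite: "finite (Jt n d tr)"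
  unfolding Jt_def by (cases tr) (auto intro!: finite_PiE finite_Mo)

lemma Jt_card: "goodt (Suc d) tr \<Longrightarrow> 1 \<le> d \<Longrightarrow> 1 \<le> n \<Longrightarrow>
   real (card (Jt n d tr)) \<le> real n powr (real d - log 2 (real d) + 1)"
proof -
  assume a: "goodt (Suc d) tr" "1 \<le> d" "1 \<le> n"
  obtain U V col where tr: "tr = (U, V, col)" by (cases tr)
  show ?thesis using card_Mo[of d U V col n] a unfolding tr Jt_def goodt_def
    by (simp add: card_PiE finite_Mo)
qed

lemma Ft_sum: "r \<in> tdom n d \<Longrightarrow> c \<in> tdom n d \<Longrightarrow> (\<Sum>z\<in>Jt n d tr. Ft n d tr z r c) = tv (X n d r c) tr"
proof -
  assume r: "r \<in> tdom n d" and c: "c \<in> tdom n d"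
  obtain U V col where tr: "tr = (U, V, col)" by (cases tr)
  show ?thesis using sum_Fz[OF r c, where col=col and U=U and V=V] unfolding tr Jt_def Ft_def tv_def by simp
qed

lemma Ft_ptb: "goodt (Suc d) tr \<Longrightarrow>
   PT_basic n d (Ft n d tr z) \<or> (\<forall>r\<in>tdom n d. \<forall>c\<in>tdom n d. Ft n d tr z r c = 0)"
  unfolding Ft_def goodt_def by (cases tr) (simp add: Fz_ptb)

theorem theorem4p2:
  fixes M :: "nat list \<Rightarrow> nat list \<Rightarrow> 'a::field" and n d :: nat
  assumes "n \<ge> 1" and "d \<ge> 1"
  shows "real (Lncsm (n^2) (d + 1) (ShiftedTensor n d M))
           \<ge> real (PT_rank n d M) / real n powr (real d - log 2 (real d) + 1)"
proof -
  let ?P = "real n powr (real d - log 2 (real d) + 1)"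
  let ?L = "Lncsm (n^2) (d + 1) (ShiftedTensor n d M)"
  obtain ts where ts: "length ts \<le> ?L" "\<forall>tr\<in>set ts. goodt (Suc d) tr"
     "\<forall>x\<in>tdom (n^2) (Suc d). ShiftedTensor n d M x = (\<Sum>tr\<leftarrow>ts. tv x tr)"
    using decomp[of "d + 1" "n^2" "ShiftedTensor n d M"] by auto
  define SIG where "SIG = Sigma {..<length ts} (\<lambda>i. Jt n d (ts ! i))"
  define F where "F p = Ft n d (ts ! fst p) (snd p)" for p
  have fin: "finite SIG" unfolding SIG_def by (auto intro: Jt_finite)
  have ptb: "\<forall>p\<in>SIG. PT_basic n d (F p) \<or> (\<forall>r\<in>tdom n d. \<forall>c\<in>tdom n d. F p r c = 0)"
  proof
    fix p assume "p \<in> SIG"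
    then have "fst p < length ts" unfolding SIG_def by auto
    then have "goodt (Suc d) (ts ! fst p)" using ts(2) by auto
    then show "PT_basic n d (F p) \<or> (\<forall>r\<in>tdom n d. \<forall>c\<in>tdom n d. F p r c = 0)"
      unfolding F_def by (rule Ft_ptb)
  qed
  have Meq: "\<forall>r\<in>tdom n d. \<forall>c\<in>tdom n d. M r c = (\<Sum>p\<in>SIG. F p r c)"
  proof (intro ballI)
    fix r c assume r: "r \<in> tdom n d" and c: "c \<in> tdom n d"
    have "M r c = ShiftedTensor n d M (X n d r c)" using ST_X assms r c by metis
    also have "\<dots> = (\<Sum>tr\<leftarrow>ts. tv (X n d r c) tr)" using ts(3) X_tdom[OF assms(1) r c] by simp
    also have "\<dots> = (\<Sum>i<length ts. tv (X n d r c) (ts ! i))"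
      by (simp add: sum_list_sum_nth atLeast0LessThan)
    also have "\<dots> = (\<Sum>i<length ts. \<Sum>z\<in>Jt n d (ts ! i). Ft n d (ts ! i) z r c)"
      using r c by (simp add: Ft_sum)
    also have "\<dots> = (\<Sum>p\<in>SIG. F p r c)"
      unfolding SIG_def F_def by (subst sum.Sigma) (auto intro: Jt_finite simp: case_prod_beta)
    finally show "M r c = (\<Sum>p\<in>SIG. F p r c)" .
  qed
  have "PT_rank n d M \<le> card SIG" by (rule ptb_sum[OF fin ptb Meq])
  then have "real (PT_rank n d M) \<le> real (card SIG)" by simp
  also have "card SIG = (\<Sum>i<length ts. card (Jt n d (ts ! i)))"
    unfolding SIG_def by (simp add: Jt_finite)
  also have "real \<dots> \<le> (\<Sum>i<length ts. ?P)"
    unfolding of_nat_sum using ts(2) assms by (intro sum_mono Jt_card) auto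
  also have "\<dots> = real (length ts) * ?P" by simp
  also have "\<dots> \<le> real ?L * ?P" using ts(1) by (intro mult_right_mono) auto
  finally have "real (PT_rank n d M) \<le> real ?L * ?P" .
  moreover have "?P > 0" using assms by simp
  ultimately show ?thesis by (simp add: divide_le_eq)
qed

end
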